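(* Let $A=\{a_n\}_{n\in\mathbb Z}\subset\mathbb R$ be an almost periodic set with $0\notin A$, enumerated so that $a_n\le a_{n+1}$ for all $n$. Then the finite limit $$\alpha_0=\lim_{N\to\infty}\sum_{|a_n|<N}\frac1{a_n}$$ exists, and for every $z\in\mathbb C\setminus A$ the series $$\alpha_z=\frac1{z-a_0}+\sum_{n=1}^\infty\left[\frac1{z-a_n}+\frac1{z-a_{-n}}\right]$$ converges absolutely.
   Context: A discrete locally finite multiset $A=\{a_n\}_{n\in\mathbb Z}\subset\mathbb R$ (a point may occur several times in the sequence) is called almost periodic if for every $\varepsilon>0$ the set $$E_\varepsilon=\{\tau\in\mathbb R:\ \exists\text{ a bijection }\sigma:\mathbb Z\to\mathbb Z\text{ with }\sup_n|a_n+\tau-a_{\sigma(n)}|<\varepsilon\}$$ is relatively dense, i.e. there is $L_\varepsilon>0$ with $E_\varepsilon\cap(x,x+L_\varepsilon)\ne\emptyset$ for every $x\in\mathbb R$. *)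

theory Defs
  imports "HOL-Analysis.Analysis"
begin

text \<open>A multiset of reals is given as a sequence a :: int => real (repetitions allowed).
  Discrete locally finite: every bounded interval contains a_n for only finitely many n.\<close>
definition locally_finite_seq :: "(int \<Rightarrow> real) \<Rightarrow> bool" where
  "locally_finite_seq a \<longleftrightarrow> (\<forall>R. finite {n. \<bar>a n\<bar> \<le> R})"

definition almost_period_set :: "(int \<Rightarrow> real) \<Rightarrow> real \<Rightarrow> real set" where
  "almost_period_set a \<epsilon> = {\<tau>. \<exists>\<sigma>::int \<Rightarrow> int. bij \<sigma> \<and>
      (\<exists>\<delta><\<epsilon>. \<forall>n. \<bar>a n + \<tau> - a (\<sigma> n)\<bar> \<le> \<delta>)}"

definition relatively_dense :: "real set \<Rightarrow> bool" where
  "relatively_dense E \<longleftrightarrow> (\<exists>L>0. \<forall>x. E \<inter> {x<..<x+L} \<noteq> {})"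

definition almost_periodic_set :: "(int \<Rightarrow> real) \<Rightarrow> bool" where
  "almost_periodic_set a \<longleftrightarrow> locally_finite_seq a \<and>
     (\<forall>\<epsilon>>0. relatively_dense (almost_period_set a \<epsilon>))"

end

theory Submission
  imports Defs
begin



locale apseq =
  fixes a :: "int \<Rightarrow> real"
  assumes ap: "almost_periodic_set a" and nz: "\<forall>n. a n \<noteq> 0"
    and mon: "\<forall>n. a n \<le> a (n + 1)"
begin

lemma mono_aux: "a m \<le> a (m + int j)"
proof (induction j)
  case 0 then show ?case by simp
next
  case (Suc j)
  have "a (m + int j) \<le> a (m + int j + 1)" using mon by blast
  then show ?case using Suc by (simp add: ac_simps)
qed

lemma amono: "m \<le> n \<Longrightarrow> a m \<le> a n"
  using mono_aux[of m "nat (n - m)"] by simp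

lemma amono_rev: "a m < a n \<Longrightarrow> m < n"
  using amono[of n m] by linarith

lemma lf: "finite {n. \<bar>a n\<bar> \<le> R}"
  using ap unfolding almost_periodic_set_def locally_finite_seq_def by blast

lemma fin: "finite {n. x < a n \<and> a n \<le> y}"
  by (rule finite_subset[OF _ lf[of "max \<bar>x\<bar> \<bar>y\<bar>"]]) auto

definition cnt :: "real \<Rightarrow> real \<Rightarrow> nat" where
  "cnt x y = card {n. x < a n \<and> a n \<le> y}"

lemma cnt_mono: "x' \<le> x \<Longrightarrow> y \<le> y' \<Longrightarrow> cnt x y \<le> cnt x' y'"
  unfolding cnt_def by (rule card_mono[OF fin]) auto

lemma cnt_add: "x \<le> y \<Longrightarrow> y \<le> z \<Longrightarrow> cnt x z = cnt x y + cnt y z"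
proof -
  assume h: "x \<le> y" "y \<le> z"
  have "{n. x < a n \<and> a n \<le> z} = {n. x < a n \<and> a n \<le> y} \<union> {n. y < a n \<and> a n \<le> z}"
    using h by auto
  moreover have "{n. x < a n \<and> a n \<le> y} \<inter> {n. y < a n \<and> a n \<le> z} = {}" by auto
  ultimately show ?thesis unfolding cnt_def by (simp add: card_Un_disjoint[OF fin fin])
qed

lemma cnt_ge: "S \<subseteq> {n. x < a n \<and> a n \<le> y} \<Longrightarrow> card S \<le> cnt x y"
  unfolding cnt_def by (rule card_mono[OF fin])

lemma ex_L: "\<exists>L>0. \<forall>x. \<exists>\<tau>. x < \<tau> \<and> \<tau> < x + L \<and> \<tau> \<in> almost_period_set a 1"
proof -
  have "relatively_dense (almost_period_set a 1)" using ap unfolding almost_periodic_set_def by simp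
  then obtain L where "L > 0" "\<forall>x. almost_period_set a 1 \<inter> {x<..<x+L} \<noteq> {}"
    unfolding relatively_dense_def by blast
  then show ?thesis by (metis (no_types, lifting) IntE disjoint_iff greaterThanLessThan_iff)
qed

lemma transfer1:
  assumes "\<tau> \<in> almost_period_set a 1"
  shows "cnt x y \<le> cnt (x + \<tau> - 1) (y + \<tau> + 1)"
proof -
  obtain \<sigma> :: "int \<Rightarrow> int" and \<delta> where s: "bij \<sigma>" "\<delta> < 1" "\<forall>n. \<bar>a n + \<tau> - a (\<sigma> n)\<bar> \<le> \<delta>"
    using assms unfolding almost_period_set_def by blast
  have "card (\<sigma> ` {n. x < a n \<and> a n \<le> y}) \<le> cnt (x + \<tau> - 1) (y + \<tau> + 1)"
  proof (rule cnt_ge, safe)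
    fix n assume "x < a n" "a n \<le> y"
    moreover have "\<bar>a n + \<tau> - a (\<sigma> n)\<bar> \<le> \<delta>" using s by blast
    ultimately show "x + \<tau> - 1 < a (\<sigma> n)" "a (\<sigma> n) \<le> y + \<tau> + 1" using s(2) by linarith+
  qed
  moreover have "inj \<sigma>" using s bij_is_inj by blast
  ultimately show ?thesis unfolding cnt_def by (simp add: card_image inj_on_subset)
qed

lemma transfer2:
  assumes "\<tau> \<in> almost_period_set a 1"
  shows "cnt (x + \<tau>) (y + \<tau>) \<le> cnt (x - 1) (y + 1)"
proof -
  obtain \<sigma> :: "int \<Rightarrow> int" and \<delta> where s: "bij \<sigma>" "\<delta> < 1" "\<forall>n. \<bar>a n + \<tau> - a (\<sigma> n)\<bar> \<le> \<delta>"
    using assms unfolding almost_period_set_def by blast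
  have ss: "\<sigma> (inv \<sigma> m) = m" for m using s(1) by (simp add: bij_is_surj surj_f_inv_f)
  have "card (inv \<sigma> ` {n. x + \<tau> < a n \<and> a n \<le> y + \<tau>}) \<le> cnt (x - 1) (y + 1)"
  proof (rule cnt_ge, safe)
    fix m assume "x + \<tau> < a m" "a m \<le> y + \<tau>"
    moreover have "\<bar>a (inv \<sigma> m) + \<tau> - a m\<bar> \<le> \<delta>" using s ss by metis
    ultimately show "x - 1 < a (inv \<sigma> m)" "a (inv \<sigma> m) \<le> y + 1" using s(2) by linarith+
  qed
  moreover have "inj (inv \<sigma>)" by (metis injI ss)
  ultimately show ?thesis unfolding cnt_def by (simp add: card_image inj_on_subset)
qed

end


context apseq begin

definition LL where "LL = (SOME L. L > 0 \<and> (\<forall>x. \<exists>\<tau>. x < \<tau> \<and> \<tau> < x + L \<and> \<tau> \<in> almost_period_set a 1))"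

lemma LL: "LL > 0" "\<forall>x. \<exists>\<tau>. x < \<tau> \<and> \<tau> < x + LL \<and> \<tau> \<in> almost_period_set a 1"
  using someI_ex[OF ex_L] unfolding LL_def by blast+

definition Mb :: "real \<Rightarrow> nat" where "Mb h = card {n. \<bar>a n\<bar> \<le> LL + h + 1}"

lemma local_bound: assumes "h \<ge> 0" shows "cnt x (x + h) \<le> Mb h"
proof -
  obtain \<tau> where t: "x - LL < \<tau>" "\<tau> < x" "\<tau> \<in> almost_period_set a 1"
    using LL(2)[rule_format, of "x - LL"] by auto
  have "cnt x (x + h) = cnt ((x - \<tau>) + \<tau>) ((x + h - \<tau>) + \<tau>)" by simp
  also have "\<dots> \<le> cnt (x - \<tau> - 1) (x + h - \<tau> + 1)" by (rule transfer2[OF t(3)])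
  also have "\<dots> \<le> Mb h" unfolding cnt_def Mb_def
    by (rule card_mono[OF lf]) (use t assms LL(1) in auto)
  finally show ?thesis .
qed

lemma perturb: assumes "u \<le> v" "h \<ge> 0"
  shows "cnt (u - h) (v + h) \<le> cnt u v + 2 * Mb h"
proof -
  have "cnt (u - h) (v + h) = cnt (u - h) u + cnt u (v + h)" using assms by (intro cnt_add) auto
  also have "cnt u (v + h) = cnt u v + cnt v (v + h)" using assms by (intro cnt_add) auto
  also have "cnt (u - h) u \<le> Mb h" using local_bound[OF assms(2), of "u - h"] by simp
  also have "cnt v (v + h) \<le> Mb h" using local_bound[OF assms(2), of v] by simp
  finally show ?thesis by simp
qed

lemma shift1: assumes "\<tau> \<in> almost_period_set a 1" "x \<le> y"
  shows "cnt x y \<le> cnt (x + \<tau>) (y + \<tau>) + 2 * Mb 1"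
  using transfer1[OF assms(1), of x y] perturb[of "x + \<tau>" "y + \<tau>" 1] assms(2)
  by (simp add: algebra_simps)

lemma shift2: assumes "\<tau> \<in> almost_period_set a 1" "x \<le> y"
  shows "cnt (x + \<tau>) (y + \<tau>) \<le> cnt x y + 2 * Mb 1"
  using transfer2[OF assms(1), of x y] perturb[of x y 1] assms(2)
  by (simp add: algebra_simps)

definition CC :: real where "CC = real (2 * Mb 1 + 2 * Mb LL)"

lemma translate: assumes "t \<ge> 0"
  shows "\<bar>real (cnt x (x + t)) - real (cnt 0 t)\<bar> \<le> CC"
proof -
  obtain \<tau> where t: "x - LL < \<tau>" "\<tau> < x" "\<tau> \<in> almost_period_set a 1"
    using LL(2)[rule_format, of "x - LL"] by auto
  have 1: "cnt x (x + t) \<le> cnt (\<tau> - LL) (\<tau> + t + LL)" using t by (intro cnt_mono) auto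
  have 2: "cnt (\<tau> - LL) (\<tau> + t + LL) \<le> cnt \<tau> (\<tau> + t) + 2 * Mb LL"
    using perturb[of \<tau> "\<tau> + t" LL] assms LL(1) by (simp add: add.assoc)
  have 3: "cnt \<tau> (\<tau> + t) \<le> cnt (x - LL) (x + t + LL)" using t by (intro cnt_mono) auto
  have 4: "cnt (x - LL) (x + t + LL) \<le> cnt x (x + t) + 2 * Mb LL"
    using perturb[of x "x + t" LL] assms LL(1) by (simp add: add.assoc)
  have 5: "cnt 0 t \<le> cnt \<tau> (\<tau> + t) + 2 * Mb 1" using shift1[OF t(3), of 0 t] assms by (simp add: add.commute)
  have 6: "cnt \<tau> (\<tau> + t) \<le> cnt 0 t + 2 * Mb 1" using shift2[OF t(3), of 0 t] assms by (simp add: add.commute)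
  show ?thesis using 1 2 3 4 5 6 unfolding CC_def by linarith
qed

lemma balance: assumes "u \<ge> 0"
  shows "\<bar>real (cnt c (c + u)) - real (cnt (c - u) c)\<bar> \<le> 2 * CC"
  using translate[OF assms, of c] translate[OF assms, of "c - u"] by simp

end


context apseq begin

lemma cnt_lin: "cnt x (x + real j) \<le> j * Mb 1"
proof (induction j)
  case 0
  show ?case unfolding cnt_def by (auto simp: card_eq_0_iff)
next
  case (Suc j)
  have "cnt x (x + real (Suc j)) = cnt x (x + real j) + cnt (x + real j) (x + real j + 1)"
    using cnt_add[of x "x + real j" "x + real j + 1"] by (simp add: ac_simps)
  also have "cnt (x + real j) (x + real j + 1) \<le> Mb 1" by (rule local_bound) simp
  finally show ?case using Suc by simp
qed

definition MM :: real where "MM = real (Mb 1) + 1"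

lemma MM_pos: "MM > 0" unfolding MM_def by simp

lemma growth_aux: assumes "x \<le> y" "{p..q} \<subseteq> {n. x - 1 < a n \<and> a n \<le> y}" "p \<le> q"
  shows "real (nat (q - p + 1)) \<le> (y - x + 2) * MM"
proof -
  define j where "j = nat \<lceil>y - x + 1\<rceil>"
  have j1: "real j \<ge> y - x + 1" "real j \<le> y - x + 2" using assms(1) unfolding j_def by linarith+
  have "card {p..q} \<le> cnt (x - 1) (x - 1 + real j)"
    by (rule cnt_ge) (use assms(2) j1 in force)
  also have "\<dots> \<le> j * Mb 1" by (rule cnt_lin)
  finally have "real (nat (q - p + 1)) \<le> real j * real (Mb 1)" using assms(3)
    by (metis card_atLeastAtMost_int of_nat_le_iff of_nat_mult)
  also have "\<dots> \<le> (y - x + 2) * real (Mb 1)" using j1 by (intro mult_right_mono) auto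
  also have "\<dots> \<le> (y - x + 2) * MM" unfolding MM_def using assms(1) by (intro mult_left_mono) auto
  finally show ?thesis .
qed

lemma growth_pos: "real k + 1 \<le> (a (int k) - a 0 + 2) * MM"
  using growth_aux[of "a 0" "a (int k)" 0 "int k"] amono by force

lemma growth_neg: "real k + 1 \<le> (a 0 - a (- int k) + 2) * MM"
  using growth_aux[of "a (- int k)" "a 0" "- int k" 0] amono by force

end


context apseq begin

lemma sym_bound: "\<exists>B\<ge>0. \<forall>k::nat. \<bar>a (int k) + a (- int k)\<bar> \<le> B"
proof -
  define K where "K = nat \<lceil>2 * CC\<rceil>"
  have K: "real K \<ge> 2 * CC" unfolding K_def by linarith
  have main: "a (- int K) \<le> (a (int k) + a (- int k)) / 2 \<and> (a (int k) + a (- int k)) / 2 < a (int K) + 1"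
    for k :: nat
  proof -
    define c where "c = (a (int k) + a (- int k)) / 2"
    define u where "u = (a (int k) - a (- int k)) / 2"
    have u0: "u \<ge> 0" unfolding u_def using amono[of "- int k" "int k"] by simp
    have cu1: "c + u = a (int k)" unfolding c_def u_def by (simp add: field_simps)
    have cu2: "c - u = a (- int k)" unfolding c_def u_def by (simp add: field_simps)
    have A: "a (- int K) \<le> c"
    proof (rule ccontr)
      assume "\<not> ?thesis" then have lt: "c < a (- int K)" by simp
      have "card {- int K..int k} \<le> cnt c (c + u)" unfolding cu1
        by (rule cnt_ge) (use lt amono in force)
      then have 1: "real k + real K + 1 \<le> real (cnt c (c + u))"
        by (simp add: card_atLeastAtMost_int; linarith)
      have "cnt (c - u) c \<le> card {- int k + 1..<- int K}" unfolding cnt_def cu2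
        by (rule card_mono) (use lt amono_rev in force)+
      then have 2: "real (cnt (c - u) c) \<le> max 0 (real k - real K - 1)"
        by (simp add: card_atLeastLessThan_int; linarith)
      show False using balance[OF u0, of c] 1 2 K by (simp add: abs_le_iff; linarith)
    qed
    have B: "c < a (int K) + 1"
    proof (rule ccontr)
      assume "\<not> ?thesis" then have ge: "c \<ge> a (int K) + 1" by simp
      have "card {- int k..int K} \<le> cnt (c - 1 - u) (c - 1)"
        by (rule cnt_ge) (use ge cu2 amono in force)
      then have 1: "real k + real K + 1 \<le> real (cnt (c - 1 - u) (c - 1))"
        by (simp add: card_atLeastAtMost_int; linarith)
      have "cnt (c - 1) (c - 1 + u) \<le> card {int K + 1..<int k}" unfolding cnt_def
      proof (rule card_mono, simp, safe)
        fix n assume h: "c - 1 < a n" "a n \<le> c - 1 + u"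
        then have "a (int K) < a n" "a n < a (int k)" using ge cu1 by linarith+
        then show "n \<in> {int K + 1..<int k}" using amono_rev by force
      qed
      then have 2: "real (cnt (c - 1) (c - 1 + u)) \<le> max 0 (real k - real K - 1)"
        by (simp add: card_atLeastLessThan_int; linarith)
      show False using balance[OF u0, of "c - 1"] 1 2 K by (simp add: abs_le_iff; linarith)
    qed
    show ?thesis using A B unfolding c_def by simp
  qed
  define B where "B = 2 * max \<bar>a (- int K)\<bar> (\<bar>a (int K)\<bar> + 1)"
  have "\<bar>a (int k) + a (- int k)\<bar> \<le> B" for k using main[of k] unfolding B_def by (simp add: abs_le_iff max_def; linarith)
  moreover have "B \<ge> 0" unfolding B_def by simp
  ultimately show ?thesis by blast
qed

end



lemma term_bound:
  fixes z :: complex and x y R B :: real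
  assumes R: "R > 0" and hx: "norm z + R \<le> x" and hy: "y \<le> - (norm z + R)" and hb: "\<bar>x + y\<bar> \<le> B"
  shows "norm (1 / (z - of_real x) + 1 / (z - of_real y)) \<le> (2 * norm z + B) / R ^ 2"
proof -
  define w1 where "w1 = z - of_real x"
  define w2 where "w2 = z - of_real y"
  have n1: "norm w1 \<ge> R"
  proof -
    have "norm (complex_of_real x) - norm z \<le> norm w1" unfolding w1_def
      by (metis norm_minus_commute norm_triangle_ineq2)
    then show ?thesis using hx by simp
  qed
  have n2: "norm w2 \<ge> R"
  proof -
    have "norm (complex_of_real y) - norm z \<le> norm w2" unfolding w2_def
      by (metis norm_minus_commute norm_triangle_ineq2)
    then show ?thesis using hy R by simp
  qed
  have nz1: "w1 \<noteq> 0" and nz2: "w2 \<noteq> 0" using n1 n2 R by auto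
  have eq: "1 / w1 + 1 / w2 = (w1 + w2) / (w1 * w2)" using nz1 nz2 by (simp add: field_simps)
  have num: "norm (w1 + w2) \<le> 2 * norm z + B"
  proof -
    have "w1 + w2 = 2 * z - of_real (x + y)" unfolding w1_def w2_def by simp
    then have "norm (w1 + w2) \<le> norm (2 * z) + norm (complex_of_real (x + y))"
      by (metis norm_triangle_ineq4)
    moreover have "norm (2 * z) = 2 * norm z" by simp
    moreover have "norm (complex_of_real (x + y)) = \<bar>x + y\<bar>" by (rule norm_of_real)
    ultimately show ?thesis using hb by linarith
  qed
  have den: "R ^ 2 \<le> norm w1 * norm w2" unfolding power2_eq_square
    using n1 n2 R by (intro mult_mono) auto
  have "norm ((w1 + w2) / (w1 * w2)) = norm (w1 + w2) / (norm w1 * norm w2)"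
    by (simp add: norm_divide norm_mult)
  also have "\<dots> \<le> (2 * norm z + B) / R ^ 2"
  proof -
    have "0 \<le> 2 * norm z + B" using num norm_ge_zero[of "w1 + w2"] by linarith
    then show ?thesis using num den R by (intro frac_le) auto
  qed
  finally have "norm (1 / w1 + 1 / w2) \<le> (2 * norm z + B) / R ^ 2" unfolding eq .
  then show ?thesis unfolding w1_def w2_def .
qed

context apseq begin

lemma part2:
  assumes zA: "\<forall>n. z \<noteq> complex_of_real (a n)"
  shows "summable (\<lambda>k::nat. norm (1 / (z - complex_of_real (a (int (Suc k))))
                                 + 1 / (z - complex_of_real (a (- int (Suc k))))))"
proof -
  obtain B where B: "B \<ge> 0" "\<forall>k::nat. \<bar>a (int k) + a (- int k)\<bar> \<le> B" using sym_bound by blast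
  define D where "D = \<bar>a 0\<bar> + 2 + norm z"
  define K0 where "K0 = nat \<lceil>2 * MM * D\<rceil> + 1"
  define Cst where "Cst = (2 * norm z + B) * (4 * MM ^ 2)"
  have MM: "MM > 0" by (rule MM_pos)
  have bnd: "norm (norm (1 / (z - complex_of_real (a (int (Suc k))))
                                 + 1 / (z - complex_of_real (a (- int (Suc k))))))
         \<le> Cst * inverse (real k ^ 2)" if k: "k \<ge> K0" for k
  proof -
    define R where "R = (real k + 2) / (2 * MM)"
    have R0: "R > 0" unfolding R_def using MM by simp
    have kD: "real k \<ge> 2 * MM * D" using k unfolding K0_def by linarith
    have RD: "R \<ge> D" unfolding R_def using MM kD by (simp add: field_simps)
    have RR: "2 * R = (real k + 2) / MM" unfolding R_def using MM by (simp add: field_simps)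
    have gp: "real (Suc k) + 1 \<le> (a (int (Suc k)) - a 0 + 2) * MM" by (rule growth_pos)
    have gn: "real (Suc k) + 1 \<le> (a 0 - a (- int (Suc k)) + 2) * MM" by (rule growth_neg)
    have gp': "(real k + 2) / MM \<le> a (int (Suc k)) - a 0 + 2" using gp MM by (simp add: field_simps)
    have gn': "(real k + 2) / MM \<le> a 0 - a (- int (Suc k)) + 2" using gn MM by (simp add: field_simps)
    have hx: "norm z + R \<le> a (int (Suc k))" using gp' RR RD unfolding D_def by linarith
    have hy: "a (- int (Suc k)) \<le> - (norm z + R)" using gn' RR RD unfolding D_def by linarith
    have "norm (1 / (z - complex_of_real (a (int (Suc k)))) + 1 / (z - complex_of_real (a (- int (Suc k)))))
       \<le> (2 * norm z + B) / R ^ 2"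
      by (rule term_bound[OF R0 hx hy]) (use B(2) in blast)
    also have "\<dots> = Cst / (real k + 2) ^ 2" unfolding R_def Cst_def using MM
      by (simp add: field_simps power2_eq_square)
    also have "\<dots> \<le> Cst / (real k) ^ 2"
    proof -
      have "Cst \<ge> 0" unfolding Cst_def using B(1) by simp
      moreover have "real k > 0" using k unfolding K0_def by simp
      ultimately show ?thesis by (intro divide_left_mono) (auto simp: power_mono)
    qed
    finally show ?thesis by (simp add: divide_inverse)
  qed
  show ?thesis
  proof (rule summable_comparison_test_ev)
    show "eventually (\<lambda>k. norm (norm (1 / (z - complex_of_real (a (int (Suc k))))
                                 + 1 / (z - complex_of_real (a (- int (Suc k)))))) \<le> Cst * inverse (real k ^ 2)) sequentially"
      using bnd unfolding eventually_at_top_linorder by blast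
    show "summable (\<lambda>k. Cst * inverse (real k ^ 2))"
      by (rule summable_mult) (rule inverse_power_summable, simp)
  qed
qed

end



lemma tail_bound:
  fixes p :: "nat \<Rightarrow> real"
  assumes sa: "summable (\<lambda>k. \<bar>p k\<bar>)" and F: "finite F" and m: "{..<m} \<subseteq> F"
  shows "\<bar>sum p F - suminf p\<bar> \<le> 2 * (\<Sum>k. \<bar>p (k + m)\<bar>)"
proof -
  have sp: "summable p" by (rule summable_rabs_cancel[OF sa])
  have s1: "suminf p = (\<Sum>k. p (k + m)) + sum p {..<m}" by (rule suminf_split_initial_segment[OF sp])
  have s2: "sum p F = sum p (F - {..<m}) + sum p {..<m}" by (rule sum.subset_diff[OF m F])
  have sa': "summable (\<lambda>k. \<bar>p (k + m)\<bar>)" using summable_ignore_initial_segment[OF sa, of m] by simp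
  have t1: "\<bar>sum p (F - {..<m})\<bar> \<le> sum (\<lambda>k. \<bar>p k\<bar>) (F - {..<m})" by (rule sum_abs)
  have "sum (\<lambda>k. \<bar>p (k + m)\<bar>) ((\<lambda>k. k - m) ` (F - {..<m})) = sum (\<lambda>k. \<bar>p (k - m + m)\<bar>) (F - {..<m})"
    by (subst sum.reindex) (auto simp: inj_on_def)
  also have "\<dots> = sum (\<lambda>k. \<bar>p k\<bar>) (F - {..<m})" by (rule sum.cong) auto
  finally have t2: "sum (\<lambda>k. \<bar>p k\<bar>) (F - {..<m}) \<le> (\<Sum>k. \<bar>p (k + m)\<bar>)"
    by (metis (no_types, lifting) sa' F abs_ge_zero finite_Diff finite_imageI sum_le_suminf)
  have t3: "\<bar>\<Sum>k. p (k + m)\<bar> \<le> (\<Sum>k. \<bar>p (k + m)\<bar>)" by (rule summable_rabs[OF sa'])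
  show ?thesis using s1 s2 t1 t2 t3 by linarith
qed

context apseq begin

definition PP where "PP N = {k. a (int (Suc k)) < N}"
definition QQ where "QQ N = {k. - N < a (- int (Suc k))}"

lemma finPP: "finite (PP N)"
proof -
  have "(\<lambda>k. int (Suc k)) ` PP N \<subseteq> {n. a 0 - 1 < a n \<and> a n \<le> N}"
  proof (intro subsetI)
    fix n assume "n \<in> (\<lambda>k. int (Suc k)) ` PP N"
    then obtain k where k: "n = int (Suc k)" "a (int (Suc k)) < N" unfolding PP_def by blast
    have "a 0 \<le> a (int (Suc k))" by (rule amono) simp
    then show "n \<in> {n. a 0 - 1 < a n \<and> a n \<le> N}" using k by (simp del: of_nat_Suc)
  qed
  then have "finite ((\<lambda>k. int (Suc k)) ` PP N)" using fin finite_subset by blast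
  then show ?thesis by (rule finite_imageD) (auto simp: inj_on_def)
qed

lemma finQQ: "finite (QQ N)"
proof -
  have "(\<lambda>k. - int (Suc k)) ` QQ N \<subseteq> {n. - N < a n \<and> a n \<le> a 0}"
  proof (intro subsetI)
    fix n assume "n \<in> (\<lambda>k. - int (Suc k)) ` QQ N"
    then obtain k where k: "n = - int (Suc k)" "- N < a (- int (Suc k))" unfolding QQ_def by blast
    have "a (- int (Suc k)) \<le> a 0" by (rule amono) simp
    then show "n \<in> {n. - N < a n \<and> a n \<le> a 0}" using k by (simp del: of_nat_Suc)
  qed
  then have "finite ((\<lambda>k. - int (Suc k)) ` QQ N)" using fin finite_subset by blast
  then show ?thesis by (rule finite_imageD) (auto simp: inj_on_def)
qed

lemma decomp:
  assumes N: "N > \<bar>a 0\<bar>"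
  shows "(\<Sum>n\<in>{n. \<bar>a n\<bar> < N}. 1 / a n) = 1 / a 0 + (\<Sum>k\<in>PP N. 1 / a (int (Suc k)))
            + (\<Sum>k\<in>QQ N. 1 / a (- int (Suc k)))"
proof -
  let ?A = "(\<lambda>k. int (Suc k)) ` PP N"
  let ?B = "(\<lambda>k. - int (Suc k)) ` QQ N"
  have eq: "{n. \<bar>a n\<bar> < N} = insert 0 (?A \<union> ?B)"
  proof (rule set_eqI, rule iffI)
    fix n assume n: "n \<in> {n. \<bar>a n\<bar> < N}"
    show "n \<in> insert 0 (?A \<union> ?B)"
    proof (cases "n = 0")
      case True then show ?thesis by simp
    next
      case False
      show ?thesis
      proof (cases "n > 0")
        case True
        then have e: "int (Suc (nat n - 1)) = n" by simp
        moreover have "nat n - 1 \<in> PP N" unfolding PP_def mem_Collect_eq e using n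
          by (simp add: abs_less_iff)
        ultimately show ?thesis by (metis UnI1 image_eqI insertCI)
      next
        case False
        then have nn: "n < 0" using \<open>n \<noteq> 0\<close> by simp
        then have e: "- int (Suc (nat (- n) - 1)) = n" by simp
        moreover have "nat (- n) - 1 \<in> QQ N" unfolding QQ_def mem_Collect_eq e using n
          by (simp add: abs_less_iff)
        ultimately show ?thesis by (metis UnI2 image_eqI insertCI)
      qed
    qed
  next
    fix n assume "n \<in> insert 0 (?A \<union> ?B)"
    then show "n \<in> {n. \<bar>a n\<bar> < N}"
    proof (elim insertE UnE imageE)
      assume "n = 0" then show ?thesis using N by simp
    next
      fix k assume "n = int (Suc k)" "k \<in> PP N"
      then show ?thesis using amono[of 0 "int (Suc k)"] N unfolding PP_def by (simp add: abs_less_iff)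
    next
      fix k assume "n = - int (Suc k)" "k \<in> QQ N"
      then show ?thesis using amono[of "- int (Suc k)" 0] N unfolding QQ_def by (simp add: abs_less_iff)
    qed
  qed
  have finA: "finite ?A" using finPP by simp
  have finB: "finite ?B" using finQQ by simp
  have "(\<Sum>n\<in>{n. \<bar>a n\<bar> < N}. 1 / a n) = 1 / a 0 + (\<Sum>n\<in>?A \<union> ?B. 1 / a n)"
    unfolding eq by (subst sum.insert) (use finA finB in auto)
  also have "(\<Sum>n\<in>?A \<union> ?B. 1 / a n) = (\<Sum>n\<in>?A. 1 / a n) + (\<Sum>n\<in>?B. 1 / a n)"
    by (rule sum.union_disjoint[OF finA finB]) auto
  also have "(\<Sum>n\<in>?A. 1 / a n) = (\<Sum>k\<in>PP N. 1 / a (int (Suc k)))"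
    by (subst sum.reindex) (auto simp: inj_on_def)
  also have "(\<Sum>n\<in>?B. 1 / a n) = (\<Sum>k\<in>QQ N. 1 / a (- int (Suc k)))"
    by (subst sum.reindex) (auto simp: inj_on_def)
  finally show ?thesis by simp
qed

end


context apseq begin

lemma err_P:
  assumes B: "\<forall>k::nat. \<bar>a (int k) + a (- int k)\<bar> \<le> B" "B \<ge> 0" and N: "N > B + 1"
  shows "\<bar>\<Sum>k\<in>PP N - QQ N. 1 / a (int (Suc k))\<bar> \<le> real (Mb (B + 1)) / (N - B)"
proof -
  have lo: "N - B \<le> a (int (Suc k))" and hi: "a (int (Suc k)) < N" if k: "k \<in> PP N - QQ N" for k
  proof -
    have "a (int (Suc k)) < N" "a (- int (Suc k)) \<le> - N" using k unfolding PP_def QQ_def by auto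
    moreover have "\<bar>a (int (Suc k)) + a (- int (Suc k))\<bar> \<le> B" using B(1) by blast
    ultimately show "N - B \<le> a (int (Suc k))" "a (int (Suc k)) < N" by linarith+
  qed
  have b1: "\<bar>1 / a (int (Suc k))\<bar> \<le> 1 / (N - B)" if k: "k \<in> PP N - QQ N" for k
  proof -
    have "0 < N - B" using N by simp
    then show ?thesis using lo[OF k] by (simp add: frac_le)
  qed
  have "\<bar>\<Sum>k\<in>PP N - QQ N. 1 / a (int (Suc k))\<bar> \<le> (\<Sum>k\<in>PP N - QQ N. \<bar>1 / a (int (Suc k))\<bar>)"
    by (rule sum_abs)
  also have "\<dots> \<le> real (card (PP N - QQ N)) * (1 / (N - B))"
    by (rule sum_bounded_above) (use b1 in auto)
  also have "card (PP N - QQ N) \<le> Mb (B + 1)"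
  proof -
    have "card (PP N - QQ N) = card ((\<lambda>k. int (Suc k)) ` (PP N - QQ N))"
      by (rule card_image[symmetric]) (auto simp: inj_on_def)
    also have "\<dots> \<le> cnt (N - B - 1) (N - B - 1 + (B + 1))"
    proof (rule cnt_ge, intro subsetI)
      fix n assume "n \<in> (\<lambda>k. int (Suc k)) ` (PP N - QQ N)"
      then obtain k where k: "n = int (Suc k)" "k \<in> PP N - QQ N" by blast
      show "n \<in> {n. N - B - 1 < a n \<and> a n \<le> N - B - 1 + (B + 1)}"
        using lo[OF k(2)] hi[OF k(2)] unfolding k(1) by simp
    qed
    also have "\<dots> \<le> Mb (B + 1)" by (rule local_bound) (use B(2) in simp)
    finally show ?thesis .
  qed
  then have "real (card (PP N - QQ N)) * (1 / (N - B)) \<le> real (Mb (B + 1)) * (1 / (N - B))"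
    using N by (intro mult_right_mono) auto
  finally show ?thesis by simp
qed

lemma err_Q:
  assumes B: "\<forall>k::nat. \<bar>a (int k) + a (- int k)\<bar> \<le> B" "B \<ge> 0" and N: "N > B + 1"
  shows "\<bar>\<Sum>k\<in>QQ N - PP N. 1 / a (- int (Suc k))\<bar> \<le> real (Mb B) / (N - B)"
proof -
  have lo: "- N < a (- int (Suc k))" and hi: "a (- int (Suc k)) \<le> B - N" if k: "k \<in> QQ N - PP N" for k
  proof -
    have "N \<le> a (int (Suc k))" "- N < a (- int (Suc k))" using k unfolding PP_def QQ_def by auto
    moreover have "\<bar>a (int (Suc k)) + a (- int (Suc k))\<bar> \<le> B" using B(1) by blast
    ultimately show "- N < a (- int (Suc k))" "a (- int (Suc k)) \<le> B - N" by linarith+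
  qed
  have b1: "\<bar>1 / a (- int (Suc k))\<bar> \<le> 1 / (N - B)" if k: "k \<in> QQ N - PP N" for k
  proof -
    have "0 < N - B" using N by simp
    moreover have "N - B \<le> \<bar>a (- int (Suc k))\<bar>" using hi[OF k] by linarith
    ultimately show ?thesis by (simp add: frac_le)
  qed
  have "\<bar>\<Sum>k\<in>QQ N - PP N. 1 / a (- int (Suc k))\<bar> \<le> (\<Sum>k\<in>QQ N - PP N. \<bar>1 / a (- int (Suc k))\<bar>)"
    by (rule sum_abs)
  also have "\<dots> \<le> real (card (QQ N - PP N)) * (1 / (N - B))"
    by (rule sum_bounded_above) (use b1 in auto)
  also have "card (QQ N - PP N) \<le> Mb B"
  proof -
    have "card (QQ N - PP N) = card ((\<lambda>k. - int (Suc k)) ` (QQ N - PP N))"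
      by (rule card_image[symmetric]) (auto simp: inj_on_def)
    also have "\<dots> \<le> cnt (- N) (- N + B)"
    proof (rule cnt_ge, intro subsetI)
      fix n assume "n \<in> (\<lambda>k. - int (Suc k)) ` (QQ N - PP N)"
      then obtain k where k: "n = - int (Suc k)" "k \<in> QQ N - PP N" by blast
      show "n \<in> {n. - N < a n \<and> a n \<le> - N + B}"
        using lo[OF k(2)] hi[OF k(2)] unfolding k(1) by simp
    qed
    also have "\<dots> \<le> Mb B" by (rule local_bound) (use B(2) in simp)
    finally show ?thesis .
  qed
  then have "real (card (QQ N - PP N)) * (1 / (N - B)) \<le> real (Mb B) * (1 / (N - B))"
    using N by (intro mult_right_mono) auto
  finally show ?thesis by simp
qed

end


context apseq begin

lemma part1: "\<exists>l::real. ((\<lambda>N::real. \<Sum>n\<in>{n. \<bar>a n\<bar> < N}. 1 / a n) \<longlongrightarrow> l) at_top"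
proof -
  obtain B where B: "B \<ge> 0" "\<forall>k::nat. \<bar>a (int k) + a (- int k)\<bar> \<le> B" using sym_bound by blast
  define p where "p k = 1 / a (int (Suc k)) + 1 / a (- int (Suc k))" for k
  have sa: "summable (\<lambda>k. \<bar>p k\<bar>)"
  proof -
    have hz: "\<forall>n. (0::complex) \<noteq> complex_of_real (a n)" using nz by simp
    have eq: "norm (1 / (0 - complex_of_real (a (int (Suc k)))) + 1 / (0 - complex_of_real (a (- int (Suc k)))))
        = \<bar>p k\<bar>" for k
    proof -
      have "1 / (0 - complex_of_real (a (int (Suc k)))) + 1 / (0 - complex_of_real (a (- int (Suc k))))
          = - complex_of_real (p k)" unfolding p_def by simp
      then show ?thesis by (metis norm_minus_cancel norm_of_real)
    qed
    show ?thesis using part2[OF hz] unfolding eq .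
  qed
  define l where "l = 1 / a 0 + suminf p"
  have "((\<lambda>N::real. \<Sum>n\<in>{n. \<bar>a n\<bar> < N}. 1 / a n) \<longlongrightarrow> l) at_top"
    unfolding tendsto_iff eventually_at_top_linorder
  proof (intro allI impI)
    fix e :: real assume e: "e > 0"
    obtain m where m: "\<forall>n\<ge>m. norm (\<Sum>i. \<bar>p (i + n)\<bar>) < e / 4"
      using suminf_exist_split[of "e / 4" "\<lambda>k. \<bar>p k\<bar>"] e sa by auto
    have T: "(\<Sum>i. \<bar>p (i + m)\<bar>) < e / 4" using m[rule_format, of m] by simp
    define E where "E = real (Mb (B + 1)) + real (Mb B)"
    have E0: "E \<ge> 0" unfolding E_def by simp
    define N1 where "N1 = (\<Sum>k<m. \<bar>a (int (Suc k))\<bar> + \<bar>a (- int (Suc k))\<bar>)"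
    define N0 where "N0 = \<bar>a 0\<bar> + N1 + B + 2 + 2 * E / e"
    have N10: "N1 \<ge> 0" unfolding N1_def by (intro sum_nonneg) auto
    have EN: "2 * E / e \<ge> 0" using E0 e by simp
    show "\<exists>N0. \<forall>N\<ge>N0. dist (\<Sum>n\<in>{n. \<bar>a n\<bar> < N}. 1 / a n) l < e"
    proof (intro exI allI impI)
      fix N assume N: "N \<ge> N0"
      have Na0: "N > \<bar>a 0\<bar>" and NB: "N > B + 1" and NB2: "N - B \<ge> 2 + 2 * E / e" and NN1: "N > N1"
        using N N10 EN B(1) unfolding N0_def by linarith+
      let ?P = "PP N" and ?Q = "QQ N"
      let ?F = "\<lambda>k. 1 / a (int (Suc k))" and ?G = "\<lambda>k. 1 / a (- int (Suc k))"
      have d: "(\<Sum>n\<in>{n. \<bar>a n\<bar> < N}. 1 / a n) = 1 / a 0 + sum ?F ?P + sum ?G ?Q"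
        by (rule decomp[OF Na0])
      have s1: "sum ?F ?P = sum ?F (?P \<inter> ?Q) + sum ?F (?P - ?Q)" by (rule sum.Int_Diff[OF finPP])
      have s2: "sum ?G ?Q = sum ?G (?P \<inter> ?Q) + sum ?G (?Q - ?P)"
        using sum.Int_Diff[OF finQQ, of ?G N ?P] by (simp add: Int_commute)
      have s3: "sum p (?P \<inter> ?Q) = sum ?F (?P \<inter> ?Q) + sum ?G (?P \<inter> ?Q)"
        unfolding p_def by (rule sum.distrib)
      have sub: "{..<m} \<subseteq> ?P \<inter> ?Q"
      proof
        fix k assume k: "k \<in> {..<m}"
        have "\<bar>a (int (Suc k))\<bar> + \<bar>a (- int (Suc k))\<bar> \<le> N1" unfolding N1_def
          by (rule member_le_sum[of k "{..<m}" "\<lambda>k. \<bar>a (int (Suc k))\<bar> + \<bar>a (- int (Suc k))\<bar>"]) (use k in auto)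
        then show "k \<in> ?P \<inter> ?Q" unfolding PP_def QQ_def using NN1 by auto
      qed
      have fin: "finite (?P \<inter> ?Q)" using finPP by simp
      have tb: "\<bar>sum p (?P \<inter> ?Q) - suminf p\<bar> \<le> 2 * (\<Sum>i. \<bar>p (i + m)\<bar>)"
        by (rule tail_bound[OF sa fin sub])
      have e1: "\<bar>sum ?F (?P - ?Q)\<bar> \<le> real (Mb (B + 1)) / (N - B)" by (rule err_P[OF B(2) B(1) NB])
      have e2: "\<bar>sum ?G (?Q - ?P)\<bar> \<le> real (Mb B) / (N - B)" by (rule err_Q[OF B(2) B(1) NB])
      have e3: "E / (N - B) < e / 2"
      proof -
        have pos: "N - B > 0" using NB by simp
        have "e * (N - B) \<ge> e * (2 + 2 * E / e)" using NB2 e by (intro mult_left_mono) auto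
        also have "e * (2 + 2 * E / e) = 2 * e + 2 * E" using e by (simp add: field_simps)
        finally have "2 * E < e * (N - B)" using e by linarith
        then show ?thesis using pos by (simp add: field_simps)
      qed
      have e4: "real (Mb (B + 1)) / (N - B) + real (Mb B) / (N - B) = E / (N - B)"
        unfolding E_def by (simp add: add_divide_distrib)
      have "(\<Sum>n\<in>{n. \<bar>a n\<bar> < N}. 1 / a n) - l
          = (sum p (?P \<inter> ?Q) - suminf p) + sum ?F (?P - ?Q) + sum ?G (?Q - ?P)"
        unfolding d l_def using s1 s2 s3 by linarith
      then have "\<bar>(\<Sum>n\<in>{n. \<bar>a n\<bar> < N}. 1 / a n) - l\<bar> < e"
        using tb e1 e2 e3 e4 T by linarith
      then show "dist (\<Sum>n\<in>{n. \<bar>a n\<bar> < N}. 1 / a n) l < e" by (simp add: dist_real_def)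
    qed
  qed
  then show ?thesis by blast
qed

end


theorem corollary1:
  fixes a :: "int \<Rightarrow> real"
  assumes "almost_periodic_set a"
    and "\<forall>n. a n \<noteq> 0"
    and "\<forall>n. a n \<le> a (n + 1)"
  shows "(\<exists>l::real. ((\<lambda>N::real. \<Sum>n\<in>{n. \<bar>a n\<bar> < N}. 1 / a n) \<longlongrightarrow> l) at_top)
    \<and> (\<forall>z::complex. (\<forall>n. z \<noteq> complex_of_real (a n)) \<longrightarrow>
         summable (\<lambda>k::nat. norm (1 / (z - complex_of_real (a (int (Suc k))))
                                 + 1 / (z - complex_of_real (a (- int (Suc k)))))))"
proof -
  interpret apseq a by (rule apseq.intro) (use assms in auto)
  show ?thesis using part1 part2 by blast
qed

end
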